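(* Let $b>0$ and let $f\in C^2(\mathbb{R}^+)$ with $f(x)\ge0$, and set $\lambda_{n,b}=2\int_0^\infty\phi_n(bx)f(x)\,\mathrm{d}x$ for $n\in\mathbb{N}^\star$ (i.e. $\lambda_{n,b}=2\int_0^\infty\phi_n(bx)\frac{\mathrm{d}\mu(x)}{x}$ with $\mathrm{d}\mu(x)=xf(x)\,\mathrm{d}x$), where $\phi_n(x)=\int_0^\pi e^{-2x\sin\eta}e^{2in\eta}\,\mathrm{d}\eta$. Assume there is a constant $C>0$ such that (1) $\limsup_{x\to0^+}x|f(x)|+\limsup_{x\to0^+}x^2|f'(x)|\le C$; (2) $\lim_{x\to+\infty}f(x)=0$ and $\lim_{x\to+\infty}xf'(x)=0$; (3) $f''(x)\ge0$ for all $x>0$. Then $\lambda_{n+1,b}+\lambda_{n-1,b}-2\lambda_{n,b}\ge0$ for all $n\ge2$. *)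

theory Defs
  imports "HOL-Analysis.Analysis"
begin

definition phi :: "nat \<Rightarrow> real \<Rightarrow> complex" where
  "phi n x = integral {0..pi}
     (\<lambda>\<eta>. of_real (exp (- 2 * x * sin \<eta>)) * cis (2 * real n * \<eta>))"

definition lam :: "(real \<Rightarrow> real) \<Rightarrow> nat \<Rightarrow> real \<Rightarrow> complex" where
  "lam f n b = 2 * integral {0<..} (\<lambda>x. phi n (b * x) * of_real (f x))"

end

theory Submission
  imports Defs "HOL-Complex_Analysis.Complex_Analysis"
begin

definition P :: "nat \<Rightarrow> real \<Rightarrow> real" where "P m y = Re (phi m y)"

lemma phi_has_integral:
  "((\<lambda>\<eta>. of_real (exp (- 2 * y * sin \<eta>)) * cis (2 * real m * \<eta>)) has_integral phi m y) {0..pi}"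
  unfolding phi_def
  by (intro integrable_integral integrable_continuous_interval continuous_intros)

lemma P_has_integral:
  "((\<lambda>\<eta>. exp (- 2 * y * sin \<eta>) * cos (2 * real m * \<eta>)) has_integral P m y) {0..pi}"
  using has_integral_Re[OF phi_has_integral[of y m]] by (simp add: P_def)

lemma P_eq: "P m y = integral {0..pi} (\<lambda>\<eta>. exp (- 2 * y * sin \<eta>) * cos (2 * real m * \<eta>))"
  using P_has_integral by (metis integral_unique)

lemma P_cont: "continuous_on UNIV (P m)"
proof -
  have "continuous_on UNIV (\<lambda>y. integral (cbox 0 pi) (\<lambda>\<eta>. exp (- 2 * y * sin \<eta>) * cos (2 * real m * \<eta>)))"
    by (intro integral_continuous_on_param) (auto intro!: continuous_intros simp: case_prod_beta)
  then show ?thesis unfolding P_eq[abs_def] by simp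
qed

lemma contour_rep:
  assumes m: "m \<ge> 1" and y: "y \<ge> 0"
  shows "Im (phi m y) = 0"
    and "((\<lambda>t. t^(2*m-1) * sin (y*(t - 1/t))) has_integral -(P m y)) {-1..1}"
proof -
  define g where "g z = z^(2*m-1) * exp(\<i> * of_real y * (z - 1/z))" for z::complex
  define S where "S = cball (0::complex) 1 \<inter> {z. 0 \<le> Im z}"
  have convS: "convex S" unfolding S_def
    by (intro convex_Int convex_cball convex_halfspace_Im_ge)
  have expb: "norm (exp(\<i> * of_real y * (w - 1/w))) \<le> 1" if "w \<in> S" for w
  proof -
    have "Im w \<ge> 0" using that by (auto simp: S_def)
    have "Re (\<i> * of_real y * (w - 1/w)) = - y * (Im w + Im w / ((Re w)\<^sup>2 + (Im w)\<^sup>2))"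
      by (simp add: Im_divide Re_divide power2_eq_square algebra_simps)
    also have "\<dots> \<le> 0" using y \<open>Im w \<ge> 0\<close>
      by (intro mult_nonpos_nonneg) (auto intro!: add_nonneg_nonneg divide_nonneg_nonneg)
    finally show ?thesis by (simp add: norm_exp_eq_Re)
  qed
  have gb: "norm (g w) \<le> norm w ^ (2*m-1)" if "w \<in> S" for w
    using expb[OF that] unfolding g_def norm_mult norm_power
    by (metis mult_left_le norm_ge_zero zero_le_power)
  have hol: "g holomorphic_on (-{0})" unfolding g_def
    by (intro holomorphic_intros) auto
  have contS: "continuous_on S g"
  proof (clarsimp simp: continuous_on_eq_continuous_within)
    fix z assume "z \<in> S"
    show "continuous (at z within S) g"
    proof (cases "z = 0")
      case True
      have g0: "g 0 = 0" using m by (simp add: g_def)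
      have "((\<lambda>w. norm w ^ (2*m-1)) \<longlongrightarrow> norm (0::complex) ^ (2*m-1)) (at 0 within S)"
        by (intro tendsto_intros)
      moreover have "norm (0::complex) ^ (2*m-1) = 0" using m by simp
      ultimately have t0: "((\<lambda>w. norm w ^ (2*m-1)) \<longlongrightarrow> 0) (at (0::complex) within S)"
        by metis
      have "(g \<longlongrightarrow> 0) (at 0 within S)"
        by (rule Lim_null_comparison[OF _ t0]) (use gb in \<open>auto simp: eventually_at_filter intro!: always_eventually\<close>)
      then show ?thesis using True g0 by (simp add: continuous_within)
    next
      case False
      then have "g field_differentiable at z"
        using hol by (intro holomorphic_on_imp_differentiable_at[of _ "-{0}"]) auto
      then show ?thesis
        by (simp add: field_differentiable_imp_continuous_at continuous_at_imp_continuous_within)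
    qed
  qed
  define arc where "arc = part_circlepath 0 1 0 pi"
  define line where "line = linepath (-1::complex) 1"
  have m1S: "-1 \<in> S" and p1S: "1 \<in> S" by (auto simp: S_def)
  have arcS: "path_image arc \<subseteq> S"
    unfolding arc_def S_def using sin_ge_zero
    by (auto simp: path_image_part_circlepath Im_exp)
  have lineS: "path_image line \<subseteq> S"
    unfolding line_def using closed_segment_subset[OF m1S p1S convS] by simp
  have fin: "pathfinish arc = pathstart line" and cl: "pathfinish (arc +++ line) = pathstart (arc +++ line)"
    by (auto simp: arc_def line_def)
  have vp: "valid_path (arc +++ line)"
    using fin by (auto simp: arc_def line_def intro!: valid_path_join)
  have C0: "(g has_contour_integral 0) (arc +++ line)"
  proof (rule Cauchy_theorem_convex[OF contS convS, of "{0}"])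
    fix x assume "x \<in> interior S - {0}"
    then show "g field_differentiable at x"
      using hol by (intro holomorphic_on_imp_differentiable_at[of _ "-{0}"]) auto
  next
    show "path_image (arc +++ line) \<subseteq> S"
      using arcS lineS fin by (simp add: path_image_join)
  qed (use vp cl in auto)
  have pw: "g (0 + complex_of_real 1 * cis t) * complex_of_real 1 * \<i> * cis t = \<i> * (of_real (exp (- 2 * y * sin t)) * cis (2 * real m * t))" for t
  proof -
    have e1: "cis t ^ (2*m-1) * cis t = cis (2 * real m * t)"
    proof -
      have "cis t ^ (2*m-1) * cis t = cis t ^ (Suc (2*m-1))" by simp
      also have "Suc (2*m-1) = 2*m" using m by simp
      also have "cis t ^ (2*m) = cis (2 * real m * t)" using Complex.DeMoivre[of t "2*m"] by simp
      finally show ?thesis .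
    qed
    have e2: "cis t - 1 / cis t = 2 * \<i> * of_real (sin t)"
    proof -
      have "1 / cis t = cis (-t)" by (simp add: divide_inverse)
      then show ?thesis by (simp add: complex_eq_iff)
    qed
    have e3: "exp (\<i> * of_real y * (2 * \<i> * of_real (sin t))) = of_real (exp (- 2 * y * sin t))"
    proof -
      have "\<i> * of_real y * (2 * \<i> * of_real (sin t)) = complex_of_real (- 2 * y * sin t)"
        by (simp add: complex_eq_iff)
      then show ?thesis by (simp only: exp_of_real)
    qed
    have "g (0 + complex_of_real 1 * cis t) * complex_of_real 1 * \<i> * cis t = \<i> * ((cis t ^ (2*m-1) * cis t) * exp (\<i> * of_real y * (cis t - 1 / cis t)))"
      by (simp add: g_def mult_ac)
    also have "\<dots> = \<i> * (cis (2 * real m * t) * of_real (exp (- 2 * y * sin t)))"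
      by (simp only: e1 e2 e3)
    finally show ?thesis by (simp add: mult_ac)
  qed
  have arcI: "(g has_contour_integral (\<i> * phi m y)) arc"
    unfolding arc_def has_contour_integral_part_circlepath_iff[OF pi_gt_zero] pw
    by (rule has_integral_mult_right[OF phi_has_integral])
  have "g contour_integrable_on line"
    unfolding line_def
    by (rule contour_integrable_continuous_linepath) (use contS lineS line_def in \<open>auto intro: continuous_on_subset\<close>)
  then obtain L where lineI: "(g has_contour_integral L) line" by (auto simp: contour_integrable_on_def)
  have "(g has_contour_integral (\<i> * phi m y + L)) (arc +++ line)"
    by (rule has_contour_integral_join[OF arcI lineI]) (auto simp: arc_def line_def)
  then have sum0: "\<i> * phi m y + L = 0" using C0 by (rule has_contour_integral_unique)
  then have phiL: "phi m y = \<i> * L"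
  proof -
    have "L = - (\<i> * phi m y)" using sum0 by (simp add: add_eq_0_iff)
    then show ?thesis by simp
  qed
  have Lint: "((\<lambda>x. g (of_real x)) has_integral L) {-1..1}"
    using lineI unfolding line_def by (subst (asm) has_contour_integral_linepath_Reals_iff) auto
  have gr: "g (of_real x) = of_real (x^(2*m-1)) * cis (y*(x - 1/x))" for x
    by (simp add: g_def cis_conv_exp algebra_simps)
  have ImI: "((\<lambda>x. x^(2*m-1) * sin (y*(x - 1/x))) has_integral Im L) {-1..1}"
    using has_integral_Im[OF Lint] by (simp add: gr)
  have ReI: "((\<lambda>x. x^(2*m-1) * cos (y*(x - 1/x))) has_integral Re L) {-1..1}"
    using has_integral_Re[OF Lint] by (simp add: gr)
  have odd: "(-x)^(2*m-1) * cos (y*(-x - 1/(-x))) = - (x^(2*m-1) * cos (y*(x - 1/x)))" for x::real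
  proof -
    have "odd (2*m-1)" using m by simp
    then have "(-x)^(2*m-1) = - (x^(2*m-1))" by simp
    moreover have "y*(-x - 1/(-x)) = - (y*(x - 1/x))" by (simp add: algebra_simps)
    ultimately show ?thesis by simp
  qed
  have R: "((\<lambda>x. (-x)^(2*m-1) * cos (y*(-x - 1/(-x)))) has_integral Re L) {-1..1}"
    using has_integral_reflect_real[THEN iffD2, OF ReI] by simp
  have R2: "((\<lambda>x. - (x^(2*m-1) * cos (y*(x - 1/x)))) has_integral Re L) {-1..1}"
    using R unfolding odd .
  have "((\<lambda>x. (x^(2*m-1) * cos (y*(x - 1/x)))) has_integral - Re L) {-1..1}"
    using has_integral_neg[OF R2] by simp
  then have "- Re L = Re L" using ReI by (rule has_integral_unique)
  then have "Re L = 0" by simp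
  then show "Im (phi m y) = 0" using phiL by simp
  show "((\<lambda>t. t^(2*m-1) * sin (y*(t - 1/t))) has_integral -(P m y)) {-1..1}"
    using ImI phiL by (simp add: P_def)
qed

lemma abs_sin_mult_le: "\<bar>sin (real k * x)\<bar> \<le> real k * \<bar>sin x\<bar>"
proof (induction k)
  case 0 then show ?case by simp
next
  case (Suc k)
  have "sin (real (Suc k) * x) = sin (real k * x) * cos x + cos (real k * x) * sin x"
    by (simp add: distrib_right sin_add)
  then have "\<bar>sin (real (Suc k) * x)\<bar> \<le> \<bar>sin (real k * x)\<bar> * \<bar>cos x\<bar> + \<bar>cos (real k * x)\<bar> * \<bar>sin x\<bar>"
    by (simp add: abs_mult[symmetric] abs_triangle_ineq)
  also have "\<dots> \<le> \<bar>sin (real k * x)\<bar> * 1 + 1 * \<bar>sin x\<bar>"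
    by (intro add_mono mult_left_mono mult_right_mono) auto
  also have "\<dots> \<le> real k * \<bar>sin x\<bar> + \<bar>sin x\<bar>" using Suc by simp
  finally show ?case by (simp add: algebra_simps)
qed

lemma cos_int0: assumes "k \<ge> 1" shows "((\<lambda>\<eta>. cos (2 * real k * \<eta>)) has_integral 0) {0..pi}"
proof -
  have "((\<lambda>\<eta>. cos (2 * real k * \<eta>)) has_integral (sin (2 * real k * pi) / (2 * real k) - sin (2 * real k * 0) / (2 * real k))) {0..pi}"
    using assms
    by (intro fundamental_theorem_of_calculus)
       (auto intro!: derivative_eq_intros simp flip: has_real_derivative_iff_has_vector_derivative)
  moreover have "sin (2 * real k * pi) = 0"
    using sin_npi[of "2*k"] by simp
  ultimately show ?thesis by simp
qed

lemma exp_sq_bound: fixes u :: real assumes "u \<ge> 0" shows "u\<^sup>2 * exp (-u) \<le> 4"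
proof -
  have "u / 2 \<le> exp (u/2)" using exp_ge_add_one_self[of "u/2"] by linarith
  then have "(u/2)\<^sup>2 \<le> (exp (u/2))\<^sup>2" using assms by (intro power_mono) auto
  also have "(exp (u/2))\<^sup>2 = exp u" by (simp add: power2_eq_square flip: exp_add)
  finally have "u\<^sup>2 \<le> 4 * exp u" by (simp add: power_divide)
  then have "u\<^sup>2 * exp (-u) \<le> 4 * exp u * exp (-u)" by (intro mult_right_mono) auto
  then show ?thesis by (simp add: mult.assoc flip: exp_add)
qed

lemma d_has_integral:
  "((\<lambda>\<eta>. exp (- 2 * y * sin \<eta>) * (cos (2 * real m * \<eta>) - cos (2 * real (Suc m) * \<eta>))) has_integral (P m y - P (Suc m) y)) {0..pi}"
  using has_integral_diff[OF P_has_integral[of y m] P_has_integral[of y "Suc m"]]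
  by (simp add: algebra_simps)

lemma d_bound_small:
  assumes m: "m \<ge> 1" and y: "y \<ge> 0"
  shows "\<bar>P m y - P (Suc m) y\<bar> \<le> 4 * pi * y"
proof -
  have c: "((\<lambda>\<eta>. cos (2 * real m * \<eta>) - cos (2 * real (Suc m) * \<eta>)) has_integral 0) {0..pi}"
    using has_integral_diff[OF cos_int0[of m] cos_int0[of "Suc m"]] m by simp
  have I: "((\<lambda>\<eta>. (exp (- 2 * y * sin \<eta>) - 1) * (cos (2 * real m * \<eta>) - cos (2 * real (Suc m) * \<eta>))) has_integral (P m y - P (Suc m) y)) {0..pi}"
    using has_integral_diff[OF d_has_integral[of y m] c] by (simp add: algebra_simps)
  have "norm (P m y - P (Suc m) y) \<le> (4 * y) * measure lborel {0..pi}"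
  proof (rule has_integral_bound_real[OF _ _ I, where S="{}"])
    show "0 \<le> 4 * y" using y by simp
    fix \<eta> assume "\<eta> \<in> {0..pi} - {}"
    then have s0: "sin \<eta> \<ge> 0" and s1: "sin \<eta> \<le> 1" by (auto intro: sin_ge_zero)
    have u: "2 * y * sin \<eta> \<ge> 0" using s0 y by simp
    have "\<bar>exp (- 2 * y * sin \<eta>) - 1\<bar> = 1 - exp (- (2 * y * sin \<eta>))" using u by simp
    also have "\<dots> \<le> 2 * y * sin \<eta>" using exp_ge_add_one_self[of "- (2 * y * sin \<eta>)"] by linarith
    also have "\<dots> \<le> 2 * y" using s1 y by (simp add: mult_left_le)
    finally have e: "\<bar>exp (- 2 * y * sin \<eta>) - 1\<bar> \<le> 2 * y" .
    have cc: "\<bar>cos (2 * real m * \<eta>) - cos (2 * real (Suc m) * \<eta>)\<bar> \<le> 2"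
      using abs_cos_le_one[of "2 * real m * \<eta>"] abs_cos_le_one[of "2 * real (Suc m) * \<eta>"] by linarith
    show "norm ((exp (- 2 * y * sin \<eta>) - 1) * (cos (2 * real m * \<eta>) - cos (2 * real (Suc m) * \<eta>))) \<le> 4 * y"
      unfolding real_norm_def abs_mult using mult_mono[OF e cc] y by simp
  qed simp
  then show ?thesis by (simp add: mult_ac)
qed

lemma d_bound_large:
  assumes y: "y > 0"
  shows "\<bar>P m y - P (Suc m) y\<bar> \<le> 2 * pi * (2 * real m + 1) / y\<^sup>2"
proof -
  have "norm (P m y - P (Suc m) y) \<le> (2 * (2 * real m + 1) / y\<^sup>2) * measure lborel {0..pi}"
  proof (rule has_integral_bound_real[OF _ _ d_has_integral, where S="{}"])
    show "0 \<le> 2 * (2 * real m + 1) / y\<^sup>2" by simp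
    fix \<eta> assume "\<eta> \<in> {0..pi} - {}"
    then have s0: "sin \<eta> \<ge> 0" by (auto intro: sin_ge_zero)
    have "cos (2 * real m * \<eta>) - cos (2 * real (Suc m) * \<eta>) = 2 * sin (real (2*m+1) * \<eta>) * sin \<eta>"
    proof -
      have "(2 * real m * \<eta> + 2 * real (Suc m) * \<eta>) / 2 = real (2*m+1) * \<eta>"
        by (simp add: field_simps)
      moreover have "(2 * real (Suc m) * \<eta> - 2 * real m * \<eta>) / 2 = \<eta>"
        by (simp add: field_simps)
      ultimately show ?thesis by (simp only: cos_diff_cos)
    qed
    then have cc: "\<bar>cos (2 * real m * \<eta>) - cos (2 * real (Suc m) * \<eta>)\<bar> \<le> 2 * (2 * real m + 1) * (sin \<eta>)\<^sup>2"
    proof -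
      have h: "\<bar>sin (real (2*m+1) * \<eta>)\<bar> * sin \<eta> \<le> (real (2*m+1) * sin \<eta>) * sin \<eta>"
        using mult_right_mono[OF abs_sin_mult_le[of "2*m+1" \<eta>]] s0 by simp
      assume eq: "cos (2 * real m * \<eta>) - cos (2 * real (Suc m) * \<eta>) = 2 * sin (real (2*m+1) * \<eta>) * sin \<eta>"
      have "\<bar>cos (2 * real m * \<eta>) - cos (2 * real (Suc m) * \<eta>)\<bar> = 2 * (\<bar>sin (real (2*m+1) * \<eta>)\<bar> * sin \<eta>)"
        unfolding eq using s0 by (simp add: abs_mult)
      also have "\<dots> \<le> 2 * ((real (2*m+1) * sin \<eta>) * sin \<eta>)" using h by simp
      finally show ?thesis by (simp add: power2_eq_square algebra_simps)
    qed
    have eb: "(2 * y * sin \<eta>)\<^sup>2 * exp (- (2 * y * sin \<eta>)) \<le> 4"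
      using s0 y by (intro exp_sq_bound) simp
    then have eb2: "(sin \<eta>)\<^sup>2 * exp (- 2 * y * sin \<eta>) \<le> 1 / y\<^sup>2"
      using y by (simp add: power_mult_distrib field_simps)
    have "\<bar>exp (- 2 * y * sin \<eta>) * (cos (2 * real m * \<eta>) - cos (2 * real (Suc m) * \<eta>))\<bar>
        \<le> exp (- 2 * y * sin \<eta>) * (2 * (2 * real m + 1) * (sin \<eta>)\<^sup>2)"
      unfolding abs_mult abs_exp_cancel using cc by (intro mult_left_mono) auto
    also have "\<dots> = 2 * (2 * real m + 1) * ((sin \<eta>)\<^sup>2 * exp (- 2 * y * sin \<eta>))" by simp
    also have "\<dots> \<le> 2 * (2 * real m + 1) * (1 / y\<^sup>2)"
      using eb2 by (intro mult_left_mono) auto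
    finally show "norm (exp (- 2 * y * sin \<eta>) * (cos (2 * real m * \<eta>) - cos (2 * real (Suc m) * \<eta>))) \<le> 2 * (2 * real m + 1) / y\<^sup>2"
      by simp
  qed simp
  then show ?thesis by (simp add: field_simps)
qed

lemma one_minus_cos_le: "1 - cos (u::real) \<le> u\<^sup>2 / 2"
proof -
  have "cos u = 1 - 2 * (sin (u/2))\<^sup>2" using cos_double_sin[of "u/2"] by simp
  moreover have "(sin (u/2))\<^sup>2 \<le> (u/2)\<^sup>2"
    using abs_sin_x_le_abs_x[of "u/2"] by (metis abs_ge_zero power2_abs power_mono)
  ultimately show ?thesis by (simp add: power_divide)
qed

lemma fprime_nonpos:
  fixes f f' f'' :: "real \<Rightarrow> real"
  assumes f'_deriv: "\<And>x. x > 0 \<Longrightarrow> (f' has_real_derivative f'' x) (at x)"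
    and cond2b: "((\<lambda>x. x * f' x) \<longlongrightarrow> 0) at_top"
    and cond3: "\<And>x. x > 0 \<Longrightarrow> f'' x \<ge> 0"
    and x0: "x0 > 0"
  shows "f' x0 \<le> 0"
proof (rule ccontr)
  assume "\<not> f' x0 \<le> 0"
  then have pos: "f' x0 > 0" by simp
  have mono: "f' x0 \<le> f' x" if "x \<ge> x0" for x
    by (rule deriv_nonneg_imp_mono[of x0 x f' f'']) (use that x0 f'_deriv cond3 in auto)
  have "eventually (\<lambda>x. \<bar>x * f' x - 0\<bar> < x0 * f' x0) at_top"
    using cond2b pos x0 by (simp add: tendsto_iff dist_real_def)
  moreover have "eventually (\<lambda>x. x \<ge> x0) at_top" by (rule eventually_ge_at_top)
  ultimately have "eventually (\<lambda>x::real. False) at_top"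
  proof eventually_elim
    case (elim x)
    have "x0 * f' x0 \<le> x * f' x"
      using mono[OF elim(2)] elim(2) x0 pos by (intro mult_mono) auto
    then show False using elim(1) by linarith
  qed
  then show False by simp
qed

lemma sine_lower:
  fixes f f' :: "real \<Rightarrow> real"
  assumes f_deriv: "\<And>x. x > 0 \<Longrightarrow> (f has_real_derivative f' x) (at x)"
    and f'_cont: "continuous_on {0<..} f'"
    and f_nonneg: "\<And>x. x > 0 \<Longrightarrow> f x \<ge> 0"
    and f'_nonpos: "\<And>x. x > 0 \<Longrightarrow> f' x \<le> 0"
    and e: "0 < e" "e \<le> R"
  shows "\<omega> * integral {e..R} (\<lambda>x. sin (\<omega> * x) * f x) \<ge> - ((\<omega> * e)\<^sup>2 / 2) * f e"
proof -
  have fc: "continuous_on {e..R} f"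
  proof (rule continuous_at_imp_continuous_on, rule ballI)
    fix x assume "x \<in> {e..R}"
    then have "x > 0" using e by auto
    then show "isCont f x" by (rule DERIV_isCont[OF f_deriv])
  qed
  have f'c: "continuous_on {e..R} f'"
    by (rule continuous_on_subset[OF f'_cont]) (use e in auto)
  define F where "F x = (1 - cos (\<omega> * x)) * f x" for x
  have fd: "(f has_real_derivative f' x) (at x within {e..R})" if "x \<in> {e..R}" for x
  proof -
    have "x > 0" using that e by auto
    then show ?thesis by (rule has_field_derivative_at_within[OF f_deriv])
  qed
  have D: "(F has_real_derivative (\<omega> * sin (\<omega> * x) * f x + (1 - cos (\<omega> * x)) * f' x)) (at x within {e..R})"
    if "x \<in> {e..R}" for x
  proof -
    have c: "((\<lambda>x. 1 - cos (\<omega> * x)) has_real_derivative \<omega> * sin (\<omega> * x)) (at x within {e..R})"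
      by (rule derivative_eq_intros refl | simp)+
    from DERIV_mult[OF c fd[OF that]] show ?thesis by (simp add: F_def[abs_def] algebra_simps)
  qed
  have FTC: "((\<lambda>x. \<omega> * sin (\<omega> * x) * f x + (1 - cos (\<omega> * x)) * f' x) has_integral (F R - F e)) {e..R}"
    using e D by (intro fundamental_theorem_of_calculus) (auto simp flip: has_real_derivative_iff_has_vector_derivative)
  have i1: "(\<lambda>x. \<omega> * sin (\<omega> * x) * f x) integrable_on {e..R}"
    by (intro integrable_continuous_interval continuous_on_mult continuous_on_const fc continuous_on_sin continuous_on_id)
  have i2: "(\<lambda>x. (1 - cos (\<omega> * x)) * f' x) integrable_on {e..R}"
    by (intro integrable_continuous_interval continuous_on_mult continuous_on_diff continuous_on_const f'c continuous_on_cos continuous_on_id)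
  have eq: "integral {e..R} (\<lambda>x. \<omega> * sin (\<omega> * x) * f x) + integral {e..R} (\<lambda>x. (1 - cos (\<omega> * x)) * f' x) = F R - F e"
    using integral_add[OF i1 i2] integral_unique[OF FTC] by simp
  have B: "integral {e..R} (\<lambda>x. (1 - cos (\<omega> * x)) * f' x) \<le> 0"
  proof -
    have "integral {e..R} (\<lambda>x. (1 - cos (\<omega> * x)) * f' x) \<le> integral {e..R} (\<lambda>x. 0)"
    proof (rule integral_le[OF i2])
    fix x assume "x \<in> {e..R}"
    then have "f' x \<le> 0" using e f'_nonpos by auto
    moreover have "1 - cos (\<omega> * x) \<ge> 0" by simp
    ultimately show "(1 - cos (\<omega> * x)) * f' x \<le> 0" by (simp add: mult_nonneg_nonpos)
    qed (rule integrable_0)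
    then show ?thesis by simp
  qed
  have FR: "F R \<ge> 0" unfolding F_def using e f_nonneg by simp
  have Fe: "F e \<le> (\<omega> * e)\<^sup>2 / 2 * f e"
    unfolding F_def using one_minus_cos_le[of "\<omega> * e"] f_nonneg[of e] e by (intro mult_right_mono) auto
  have "\<omega> * integral {e..R} (\<lambda>x. sin (\<omega> * x) * f x) = integral {e..R} (\<lambda>x. \<omega> * sin (\<omega> * x) * f x)"
    by (simp add: mult.assoc)
  then show ?thesis using eq B FR Fe by linarith
qed

definition W :: "nat \<Rightarrow> real \<Rightarrow> real" where "W k t = t^(2*k+1) * (1 - t\<^sup>2)\<^sup>2"
definition Dl :: "nat \<Rightarrow> real \<Rightarrow> real" where "Dl k y = P (k+3) y + P (k+1) y - 2 * P (k+2) y"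

lemma Dl_rep:
  assumes y: "y \<ge> 0"
  shows "((\<lambda>t. W k t * sin (y * (1/t - t))) has_integral Dl k y) {-1..1}"
proof -
  have a: "((\<lambda>t. t^(2*k+5) * sin (y*(t - 1/t))) has_integral -(P (k+3) y)) {-1..1}"
    using contour_rep(2)[of "k+3" y] y by (simp add: numeral_eq_Suc)
  have b: "((\<lambda>t. t^(2*k+1) * sin (y*(t - 1/t))) has_integral -(P (k+1) y)) {-1..1}"
    using contour_rep(2)[of "k+1" y] y by simp
  have c: "((\<lambda>t. t^(2*k+3) * sin (y*(t - 1/t))) has_integral -(P (k+2) y)) {-1..1}"
    using contour_rep(2)[of "k+2" y] y by (simp add: numeral_eq_Suc)
  have I: "((\<lambda>t. t^(2*k+5) * sin (y*(t - 1/t)) + t^(2*k+1) * sin (y*(t - 1/t)) - 2 * (t^(2*k+3) * sin (y*(t - 1/t))))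
         has_integral (-(P (k+3) y) + -(P (k+1) y) - 2 * -(P (k+2) y))) {-1..1}"
    by (intro has_integral_diff has_integral_add has_integral_mult_right a b c)
  have eq: "t^(2*k+5) * sin (y*(t - 1/t)) + t^(2*k+1) * sin (y*(t - 1/t)) - 2 * (t^(2*k+3) * sin (y*(t - 1/t)))
      = - (W k t * sin (y * (1/t - t)))" for t
  proof -
    have "sin (y * (1/t - t)) = - sin (y*(t - 1/t))"
      by (metis minus_diff_eq mult_minus_right sin_minus)
    moreover have "t^(2*k+5) + t^(2*k+1) - 2 * t^(2*k+3) = W k t"
      unfolding W_def by (simp add: power_add power2_eq_square algebra_simps numeral_eq_Suc)
    ultimately show ?thesis by (simp add: algebra_simps flip: \<open>t^(2*k+5) + t^(2*k+1) - 2 * t^(2*k+3) = W k t\<close>)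
  qed
  have "((\<lambda>t. - (W k t * sin (y * (1/t - t)))) has_integral (-(P (k+3) y) + -(P (k+1) y) - 2 * -(P (k+2) y))) {-1..1}"
    using I unfolding eq .
  moreover have "(-(P (k+3) y) + -(P (k+1) y) - 2 * -(P (k+2) y)) = - Dl k y" by (simp add: Dl_def)
  ultimately have "((\<lambda>t. - (W k t * sin (y * (1/t - t)))) has_integral - Dl k y) {-1..1}" by simp
  from has_integral_neg[OF this] show ?thesis by simp
qed

lemma V_cont: "continuous_on UNIV (\<lambda>p::real\<times>real. W k (snd p) * sin (b * fst p * (1 / snd p - snd p)))"
proof (clarsimp simp: continuous_on_eq_continuous_within)
  fix x t :: real
  show "continuous (at (x, t)) (\<lambda>p::real\<times>real. W k (snd p) * sin (b * fst p * (1 / snd p - snd p)))"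
  proof (cases "t = 0")
    case False
    then show ?thesis unfolding W_def by (intro continuous_intros) auto
  next
    case True
    have W0: "W k 0 = 0" by (simp add: W_def)
    have Wc: "((\<lambda>p::real\<times>real. \<bar>W k (snd p)\<bar>) \<longlongrightarrow> \<bar>W k (snd (x,t))\<bar>) (at (x,t))"
      unfolding W_def by (intro tendsto_intros)
    then have Wc0: "((\<lambda>p::real\<times>real. \<bar>W k (snd p)\<bar>) \<longlongrightarrow> 0) (at (x,t))"
      using True W0 by simp
    have "((\<lambda>p::real\<times>real. W k (snd p) * sin (b * fst p * (1 / snd p - snd p))) \<longlongrightarrow> 0) (at (x,t))"
    proof (rule Lim_null_comparison[OF _ Wc0])
      show "\<forall>\<^sub>F p in at (x, t). norm (W k (snd p) * sin (b * fst p * (1 / snd p - snd p))) \<le> \<bar>W k (snd p)\<bar>"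
        by (intro always_eventually allI) (simp add: abs_mult mult_left_le)
    qed
    then show ?thesis using True W0 by (simp add: continuous_at)
  qed
qed

lemma K_cont:
  assumes fc: "continuous_on {e..R} f"
  shows "continuous_on ({e..R} \<times> {-1..1}) (\<lambda>(x::real, t::real). W k t * sin (b * x * (1 / t - t)) * f x)"
proof -
  have "continuous_on ({e..R} \<times> {-1..1}) (\<lambda>p::real\<times>real. W k (snd p) * sin (b * fst p * (1 / snd p - snd p)) * f (fst p))"
  proof (rule continuous_on_mult)
    show "continuous_on ({e..R} \<times> {-1..1}) (\<lambda>p::real\<times>real. W k (snd p) * sin (b * fst p * (1 / snd p - snd p)))"
      by (rule continuous_on_subset[OF V_cont]) auto
    show "continuous_on ({e..R} \<times> {- 1..1}) (\<lambda>p::real\<times>real. f (fst p))"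
      by (rule continuous_on_compose2[OF fc continuous_on_fst[OF continuous_on_id]]) auto
  qed
  then show ?thesis by (simp add: case_prod_beta)
qed

lemma K_cont':
  assumes fc: "continuous_on {e..R} f"
  shows "continuous_on ({-1..1} \<times> {e..R}) (\<lambda>(t::real, x::real). W k t * sin (b * x * (1 / t - t)) * f x)"
proof -
  have "continuous_on ({-1..1} \<times> {e..R}) ((\<lambda>(x::real, t::real). W k t * sin (b * x * (1 / t - t)) * f x) \<circ> (\<lambda>(t,x). (x,t)))"
    by (rule continuous_on_compose[OF _ continuous_on_subset[OF K_cont[OF fc]]])
       (auto intro!: continuous_intros simp: case_prod_beta)
  then show ?thesis by (simp add: o_def case_prod_beta)
qed

lemma per_t_bound:
  fixes f f' :: "real \<Rightarrow> real"
  assumes b: "b > 0"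
    and f_deriv: "\<And>x. x > 0 \<Longrightarrow> (f has_real_derivative f' x) (at x)"
    and f'_cont: "continuous_on {0<..} f'"
    and f_nonneg: "\<And>x. x > 0 \<Longrightarrow> f x \<ge> 0"
    and f'_nonpos: "\<And>x. x > 0 \<Longrightarrow> f' x \<le> 0"
    and e: "0 < e" "e \<le> R"
    and t: "t \<in> {-1..1}"
  shows "W k t * integral {e..R} (\<lambda>x. sin (b * (1/t - t) * x) * f x) \<ge> - (b * e\<^sup>2 / 2 * f e)"
proof -
  define \<omega> where "\<omega> = b * (1/t - t)"
  define S where "S = integral {e..R} (\<lambda>x. sin (\<omega> * x) * f x)"
  define c where "c = t^(2*k+2) * (1 - t\<^sup>2) / b"
  have t2: "t\<^sup>2 \<le> 1" using t by (auto simp: abs_square_le_1)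
  have ev: "0 \<le> t^(2*k+2)"
  proof -
    have "t^(2*k+2) = (t^2)^(k+1)" by (simp only: power_mult[symmetric]) (simp add: algebra_simps)
    then show ?thesis by simp
  qed
  have c0: "c \<ge> 0" unfolding c_def using t2 b ev
    by (intro divide_nonneg_pos mult_nonneg_nonneg) auto
  have Wc: "W k t = c * \<omega>"
  proof (cases "t = 0")
    case True then show ?thesis by (simp add: W_def c_def \<omega>_def)
  next
    case False
    then show ?thesis unfolding W_def c_def \<omega>_def using b
      by (simp add: field_simps power2_eq_square)
  qed
  have cw: "c * \<omega>\<^sup>2 \<le> b"
  proof (cases "t = 0")
    case True then show ?thesis using b by (simp add: c_def \<omega>_def)
  next
    case False
    have eq: "c * \<omega>\<^sup>2 = b * (t^(2*k) * (1 - t\<^sup>2)^3)" unfolding c_def \<omega>_def using b False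
      by (simp add: field_simps power2_eq_square power3_eq_cube)
    have "t^(2*k) \<le> 1" using t2 by (simp add: power_mult power_le_one)
    moreover have "(1 - t\<^sup>2)^3 \<le> 1" using t2 by (intro power_le_one) auto
    moreover have "t^(2*k) \<ge> 0" by (simp add: power_mult)
    moreover have "(1 - t\<^sup>2)^3 \<ge> 0" using t2 by simp
    ultimately have "t^(2*k) * (1 - t\<^sup>2)^3 \<le> 1" by (simp add: mult_le_one)
    then show ?thesis unfolding eq using b by (simp add: mult_left_le)
  qed
  have sl: "\<omega> * S \<ge> - ((\<omega> * e)\<^sup>2 / 2) * f e"
    unfolding S_def by (rule sine_lower[OF f_deriv f'_cont f_nonneg f'_nonpos e])
  have fe: "f e \<ge> 0" using f_nonneg e by simp
  have "W k t * S = c * (\<omega> * S)" using Wc by simp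
  also have "\<dots> \<ge> c * (- ((\<omega> * e)\<^sup>2 / 2) * f e)" using sl c0 by (rule mult_left_mono)
  also have "c * (- ((\<omega> * e)\<^sup>2 / 2) * f e) = - ((c * \<omega>\<^sup>2) * (e\<^sup>2 / 2 * f e))"
    by (simp add: power_mult_distrib algebra_simps)
  also have "\<dots> \<ge> - (b * (e\<^sup>2 / 2 * f e))"
    using cw fe by (simp add: mult_right_mono)
  finally show ?thesis unfolding S_def \<omega>_def by (simp add: mult_ac)
qed

lemma finite_bound:
  fixes f f' :: "real \<Rightarrow> real"
  assumes b: "b > 0"
    and f_deriv: "\<And>x. x > 0 \<Longrightarrow> (f has_real_derivative f' x) (at x)"
    and f'_cont: "continuous_on {0<..} f'"
    and f_nonneg: "\<And>x. x > 0 \<Longrightarrow> f x \<ge> 0"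
    and f'_nonpos: "\<And>x. x > 0 \<Longrightarrow> f' x \<le> 0"
    and e: "0 < e" "e \<le> R"
  shows "integral {e..R} (\<lambda>x. Dl k (b*x) * f x) \<ge> - (b * e\<^sup>2 * f e)"
proof -
  have fc: "continuous_on {e..R} f"
  proof (rule continuous_at_imp_continuous_on, rule ballI)
    fix x assume "x \<in> {e..R}"
    then have "x > 0" using e by auto
    then show "isCont f x" by (rule DERIV_isCont[OF f_deriv])
  qed
  define K where "K = (\<lambda>x t. W k t * sin (b * x * (1 / t - t)) * f x)"
  have eq1: "integral {e..R} (\<lambda>x. Dl k (b*x) * f x) = integral (cbox e R) (\<lambda>x. integral (cbox (-1) 1) (K x))"
    unfolding cbox_interval
  proof (rule Henstock_Kurzweil_Integration.integral_cong)
    fix x assume "x \<in> {e..R}"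
    then have "b * x \<ge> 0" using b e by auto
    from integral_unique[OF Dl_rep[OF this, of k]]
    show "Dl k (b*x) * f x = integral {-1..1} (K x)"
      unfolding K_def by simp
  qed
  have Kc: "continuous_on (cbox (e,-1) (R,1)) (\<lambda>(x,t). K x t)"
  proof -
    have ce: "cbox (e,-1) (R,1) = {e..R} \<times> {-1..(1::real)}" unfolding cbox_Pair_eq by (simp add: cbox_interval)
    show ?thesis unfolding ce K_def by (rule K_cont[OF fc])
  qed
  have eq2: "integral (cbox e R) (\<lambda>x. integral (cbox (-1) 1) (K x)) = integral (cbox (-1) 1) (\<lambda>t. integral (cbox e R) (\<lambda>x. K x t))"
    by (rule integral_swap_continuous[OF Kc])
  have cont: "continuous_on {-1..1} (\<lambda>t. integral (cbox e R) (\<lambda>x. K x t))"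
    by (rule integral_continuous_on_param) (use K_cont'[OF fc, of k b] in \<open>simp add: K_def cbox_interval\<close>)
  have integ: "(\<lambda>t. integral (cbox e R) (\<lambda>x. K x t)) integrable_on {-1..1}"
    by (rule integrable_continuous_interval[OF cont])
  have low: "integral (cbox e R) (\<lambda>x. K x t) \<ge> - (b * e\<^sup>2 / 2 * f e)" if t: "t \<in> {-1..1}" for t
  proof -
    have "K x t = W k t * (sin (b * (1/t - t) * x) * f x)" for x
      unfolding K_def by (simp add: mult_ac)
    then have "integral (cbox e R) (\<lambda>x. K x t) = W k t * integral {e..R} (\<lambda>x. sin (b * (1/t - t) * x) * f x)"
      by (simp add: cbox_interval)
    then show ?thesis using per_t_bound[OF b f_deriv f'_cont f_nonneg f'_nonpos e t, of k] by simp
  qed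
  have "integral {-1..1} (\<lambda>t::real. - (b * e\<^sup>2 / 2 * f e)) \<le> integral {-1..1} (\<lambda>t. integral (cbox e R) (\<lambda>x. K x t))"
    using low integ by (intro Henstock_Kurzweil_Integration.integral_le) auto
  then have "- (b * e\<^sup>2 * f e) \<le> integral {-1..1} (\<lambda>t. integral (cbox e R) (\<lambda>x. K x t))"
    by simp
  then show ?thesis using eq1 eq2 by (simp add: cbox_interval)
qed

lemma integral_of_real_eq:
  fixes g :: "real \<Rightarrow> real"
  shows "integral S (\<lambda>x. complex_of_real (g x)) = of_real (integral S g)"
proof (cases "g integrable_on S")
  case True
  show ?thesis by (rule integral_unique[OF has_integral_of_real[OF integrable_integral[OF True]]])
next
  case False
  have "\<not> (\<lambda>x. complex_of_real (g x)) integrable_on S"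
  proof
    assume "(\<lambda>x. complex_of_real (g x)) integrable_on S"
    then obtain I where "((\<lambda>x. complex_of_real (g x)) has_integral I) S" by (auto simp: integrable_on_def)
    from has_integral_Re[OF this] have "g integrable_on S" by (auto simp: integrable_on_def)
    then show False using False by simp
  qed
  then show ?thesis using False by (simp add: not_integrable_integral)
qed

lemma dom_integrable: "(\<lambda>x::real. 1 / (1 + x)\<^sup>2) integrable_on {0<..}"
proof -
  have "((\<lambda>x::real. 1 / (1 + x)\<^sup>2) has_integral 1) {0..}"
  proof (rule has_integral_to_inf)
    fix y :: real
    show "(\<lambda>x. 1 / (1 + x)\<^sup>2) integrable_on {0..y}"
      by (intro integrable_continuous_interval continuous_intros) auto
  next
    have "integral {0..y} (\<lambda>x::real. 1 / (1 + x)\<^sup>2) = 1 - 1 / (1 + y)" if "y \<ge> 0" for y :: real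
    proof -
      have "((\<lambda>x::real. 1 / (1 + x)\<^sup>2) has_integral ((- 1 / (1 + y)) - (- 1 / (1 + 0)))) {0..y}"
      proof (rule fundamental_theorem_of_calculus[OF that])
        fix x assume x: "x \<in> {0..y}"
        have "((\<lambda>x. - 1 / (1 + x)) has_real_derivative 1 / (1 + x)\<^sup>2) (at x within {0..y})"
          using x by (auto intro!: derivative_eq_intros simp: power2_eq_square field_simps)
        then show "((\<lambda>x. - 1 / (1 + x)) has_vector_derivative 1 / (1 + x)\<^sup>2) (at x within {0..y})"
          by (simp add: has_real_derivative_iff_has_vector_derivative)
      qed
      then show ?thesis by (simp add: integral_unique)
    qed
    then have ev: "\<forall>\<^sub>F y in at_top. integral {0..y} (\<lambda>x::real. 1 / (1 + x)\<^sup>2) = 1 - 1 / (1 + y)"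
      by (intro eventually_at_top_linorderI[of 0]) auto
    have "((\<lambda>y::real. 1 - 1 / (1 + y)) \<longlongrightarrow> 1) at_top" by real_asymp
    then show "((\<lambda>y. integral {0..y} (\<lambda>x::real. 1 / (1 + x)\<^sup>2)) \<longlongrightarrow> 1) at_top"
      using ev by (simp add: tendsto_cong)
  qed simp
  then have "(\<lambda>x::real. 1 / (1 + x)\<^sup>2) integrable_on {0..}" by (auto simp: integrable_on_def)
  then show ?thesis
    by (rule integrable_spike_set) (auto intro: negligible_subset[OF negligible_sing[of 0]])
qed

lemma bound_transfer:
  fixes f d :: "real \<Rightarrow> real"
  assumes b: "b > 0" and dl: "0 < \<delta>" "\<delta> \<le> 1" and C1: "C1 \<ge> 0"
    and hx: "\<And>x. 0 < x \<Longrightarrow> x < \<delta> \<Longrightarrow> x * f x \<le> C1"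
    and fnn: "\<And>x. 0 < x \<Longrightarrow> f x \<ge> 0"
    and anti: "\<And>x. \<delta> \<le> x \<Longrightarrow> f x \<le> f \<delta>"
    and dA: "\<And>y. 0 < y \<Longrightarrow> \<bar>d y\<bar> \<le> A * y"
    and dB: "\<And>y. 0 < y \<Longrightarrow> \<bar>d y\<bar> \<le> B / y\<^sup>2"
    and AB: "A \<ge> 0" "B \<ge> 0"
    and x: "x > 0"
  shows "\<bar>d (b * x) * f x\<bar> \<le> (4 * A * b * C1 + B * f \<delta> * (1 + 1/\<delta>)\<^sup>2 / b\<^sup>2) * (1 / (1 + x)\<^sup>2)"
proof -
  have fx: "f x \<ge> 0" using fnn x by simp
  have fd: "f \<delta> \<ge> 0" using fnn dl by simp
  have M1: "0 \<le> 4 * A * b * C1" using AB b C1 by simp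
  have M2: "0 \<le> B * f \<delta> * (1 + 1/\<delta>)\<^sup>2 / b\<^sup>2" using AB fd by simp
  have pos: "(1 + x)\<^sup>2 > 0" using x by simp
  show ?thesis
  proof (cases "x < \<delta>")
    case True
    have "\<bar>d (b * x) * f x\<bar> = \<bar>d (b * x)\<bar> * f x" using fx by (simp add: abs_mult)
    also have "\<dots> \<le> (A * (b * x)) * f x" using dA[of "b*x"] b x fx by (intro mult_right_mono) auto
    also have "\<dots> = A * b * (x * f x)" by (simp add: mult_ac)
    also have "\<dots> \<le> A * b * C1" using hx[OF x True] AB b by (intro mult_left_mono) auto
    also have "\<dots> \<le> 4 * A * b * C1 * (1 / (1 + x)\<^sup>2)"
    proof -
      have "1 + x \<le> 2" using True dl by simp
      then have "(1 + x)\<^sup>2 \<le> 2\<^sup>2" using x by (intro power_mono) auto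
      then have "(1 + x)\<^sup>2 \<le> 4" by simp
      then have "1 \<le> 4 * (1 / (1 + x)\<^sup>2)" using pos by (simp add: field_simps)
      then show ?thesis using AB b C1 mult_left_mono[of 1 "4 * (1 / (1 + x)\<^sup>2)" "A * b * C1"]
        by (simp add: mult_ac)
    qed
    also have "\<dots> \<le> (4 * A * b * C1 + B * f \<delta> * (1 + 1/\<delta>)\<^sup>2 / b\<^sup>2) * (1 / (1 + x)\<^sup>2)"
      using M2 pos by (intro mult_right_mono) auto
    finally show ?thesis .
  next
    case False
    then have xd: "\<delta> \<le> x" by simp
    have "\<bar>d (b * x) * f x\<bar> = \<bar>d (b * x)\<bar> * f x" using fx by (simp add: abs_mult)
    also have "\<dots> \<le> (B / (b * x)\<^sup>2) * f \<delta>"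
      using dB[of "b*x"] b x fx anti[OF xd] AB by (intro mult_mono) auto
    also have "\<dots> = B * f \<delta> / b\<^sup>2 * (1 / x\<^sup>2)" by (simp add: power_mult_distrib)
    also have "\<dots> \<le> B * f \<delta> / b\<^sup>2 * ((1 + 1/\<delta>)\<^sup>2 / (1 + x)\<^sup>2)"
    proof (rule mult_left_mono)
      have "1 + x \<le> x * (1 + 1/\<delta>)" using xd dl by (simp add: field_simps)
      then have "(1 + x)\<^sup>2 \<le> (x * (1 + 1/\<delta>))\<^sup>2" using x by (intro power_mono) auto
      then have h: "(1 + x)\<^sup>2 \<le> x\<^sup>2 * (1 + 1/\<delta>)\<^sup>2" by (simp only: power_mult_distrib)
      have q0: "1 + 1/\<delta> > 0" using dl by (intro add_pos_pos) auto
      then have q: "(1 + 1/\<delta>)\<^sup>2 > 0" by simp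
      have "(1 + 1/\<delta>)\<^sup>2 / (x\<^sup>2 * (1 + 1/\<delta>)\<^sup>2) \<le> (1 + 1/\<delta>)\<^sup>2 / (1 + x)\<^sup>2"
        using h q x pos by (intro divide_left_mono) auto
      moreover have "(1 + 1/\<delta>)\<^sup>2 / (x\<^sup>2 * (1 + 1/\<delta>)\<^sup>2) = 1 / x\<^sup>2" using q by simp
      ultimately show "1 / x\<^sup>2 \<le> (1 + 1/\<delta>)\<^sup>2 / (1 + x)\<^sup>2" by simp
    qed (use AB fd in simp)
    also have "\<dots> = (B * f \<delta> * (1 + 1/\<delta>)\<^sup>2 / b\<^sup>2) * (1 / (1 + x)\<^sup>2)" by simp
    also have "\<dots> \<le> (4 * A * b * C1 + B * f \<delta> * (1 + 1/\<delta>)\<^sup>2 / b\<^sup>2) * (1 / (1 + x)\<^sup>2)"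
      using M1 pos by (intro mult_right_mono) auto
    finally show ?thesis .
  qed
qed

lemma S_leb: "({0<..} :: real set) \<in> sets lebesgue"
  by (rule lebesgue_openin) auto


lemma phi_real: assumes "m \<ge> 1" "y \<ge> 0" shows "phi m y = complex_of_real (P m y)"
  using contour_rep(1)[OF assms] by (simp add: complex_eq_iff P_def)

theorem lemma3p8:
  fixes f f' f'' :: "real \<Rightarrow> real" and b C :: real and n :: nat
  assumes b_pos: "b > 0"
    and f_deriv: "\<And>x. x > 0 \<Longrightarrow> (f has_real_derivative f' x) (at x)"
    and f'_deriv: "\<And>x. x > 0 \<Longrightarrow> (f' has_real_derivative f'' x) (at x)"
    and f''_cont: "continuous_on {0<..} f''"
    and f_nonneg: "\<And>x. x > 0 \<Longrightarrow> f x \<ge> 0"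
    and C_pos: "C > 0"
    and cond1: "Limsup (at_right 0) (\<lambda>x. ereal (x * \<bar>f x\<bar>))
              + Limsup (at_right 0) (\<lambda>x. ereal (x\<^sup>2 * \<bar>f' x\<bar>)) \<le> ereal C"
    and cond2a: "(f \<longlongrightarrow> 0) at_top"
    and cond2b: "((\<lambda>x. x * f' x) \<longlongrightarrow> 0) at_top"
    and cond3: "\<And>x. x > 0 \<Longrightarrow> f'' x \<ge> 0"
    and n_ge: "n \<ge> 2"
  shows "Im (lam f (n + 1) b + lam f (n - 1) b - 2 * lam f n b) = 0
       \<and> Re (lam f (n + 1) b + lam f (n - 1) b - 2 * lam f n b) \<ge> 0"
proof -
  define k where "k = n - 2"
  have nk: "n = k + 2" using n_ge by (simp add: k_def)
  define S where "S = ({0<..} :: real set)"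
  have fc0: "continuous_on S f"
  proof (rule continuous_at_imp_continuous_on, rule ballI)
    fix x assume "x \<in> S" then have "x > 0" by (simp add: S_def)
    then show "isCont f x" by (rule DERIV_isCont[OF f_deriv])
  qed
  have f'c: "continuous_on {0<..} f'"
  proof (rule continuous_at_imp_continuous_on, rule ballI)
    fix x :: real assume "x \<in> {0<..}" then have "x > 0" by simp
    then show "isCont f' x" by (rule DERIV_isCont[OF f'_deriv])
  qed
  have f'np: "f' x \<le> 0" if "x > 0" for x
    by (rule fprime_nonpos[OF f'_deriv cond2b cond3 that])
  have anti: "f x \<le> f a" if "0 < a" "a \<le> x" for a x
  proof (rule deriv_nonpos_imp_antimono[of a x f f'])
    fix z assume "z \<in> {a..x}" then have "z > 0" using that by auto
    then show "(f has_real_derivative f' z) (at z)" "f' z \<le> 0" using f_deriv f'np by auto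
  qed (use that in auto)
  have L2: "0 \<le> Limsup (at_right (0::real)) (\<lambda>x. ereal (x\<^sup>2 * \<bar>f' x\<bar>))"
    by (intro le_Limsup always_eventually allI) auto
  have L1: "Limsup (at_right (0::real)) (\<lambda>x. ereal (x * \<bar>f x\<bar>)) \<le> ereal C"
    using add_increasing2[OF L2 order_refl] cond1 by (rule order_trans)
  then have "Limsup (at_right (0::real)) (\<lambda>x. ereal (x * \<bar>f x\<bar>)) < ereal (C + 1)"
    by (rule order_le_less_trans) simp
  from Limsup_lessD[OF this]
  obtain b0 where b0: "b0 > 0" and hb0: "\<And>y. y > 0 \<Longrightarrow> y < b0 \<Longrightarrow> ereal (y * \<bar>f y\<bar>) < ereal (C + 1)"
    unfolding eventually_at_right_field by auto
  define \<delta> where "\<delta> = min b0 1"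
  have dl: "0 < \<delta>" "\<delta> \<le> 1" using b0 by (auto simp: \<delta>_def)
  have hx: "x * f x \<le> C + 1" if "0 < x" "x < \<delta>" for x
  proof -
    have "ereal (x * \<bar>f x\<bar>) < ereal (C + 1)" using hb0[OF that(1)] that by (auto simp: \<delta>_def)
    then show ?thesis using f_nonneg[OF that(1)] by simp
  qed
  have antid: "f x \<le> f \<delta>" if "\<delta> \<le> x" for x using anti[OF dl(1) that] .
  define G where "G m x = P m (b*x) * f x" for m x
  define d where "d m x = G m x - G (Suc m) x" for m x
  define I where "I m = integral S (G m)" for m
  have lam_eq: "lam f m b = 2 * complex_of_real (I m)" if "m \<ge> 1" for m
  proof -
    have "integral {0<..} (\<lambda>x. phi m (b * x) * complex_of_real (f x)) = integral S (\<lambda>x. complex_of_real (G m x))"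
      unfolding S_def
    proof (rule Henstock_Kurzweil_Integration.integral_cong)
      fix x :: real assume "x \<in> {0<..}"
      then have "b * x \<ge> 0" using b_pos by simp
      then show "phi m (b * x) * complex_of_real (f x) = complex_of_real (G m x)"
        using phi_real[OF that] by (simp add: G_def)
    qed
    then show ?thesis unfolding lam_def I_def integral_of_real_eq by simp
  qed
  have Gc: "continuous_on S (G m)" for m
  proof -
    have "continuous_on S (\<lambda>x. P m (b*x))"
      by (rule continuous_on_compose2[OF P_cont, of _ "\<lambda>x. b*x"]) (auto intro!: continuous_intros)
    then show ?thesis unfolding G_def[abs_def] using fc0 by (intro continuous_on_mult) auto
  qed
  have dmeas: "d m \<in> borel_measurable (lebesgue_on S)" for m
  proof -
    have "continuous_on S (d m)" unfolding d_def[abs_def] using Gc by (intro continuous_on_diff) auto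
    then show ?thesis using S_leb unfolding S_def by (intro continuous_imp_measurable_on_sets_lebesgue) auto
  qed
  define M where "M m = 4 * (4*pi) * b * (C+1) + (2*pi*(2*real m+1)) * f \<delta> * (1 + 1/\<delta>)\<^sup>2 / b\<^sup>2" for m
  define Dom where "Dom m x = M m * (1 / (1 + x)\<^sup>2)" for m x
  have fd0: "f \<delta> \<ge> 0" using f_nonneg dl by simp
  have Dom0: "Dom m x \<ge> 0" for m x
    unfolding Dom_def M_def using b_pos C_pos fd0 by (intro mult_nonneg_nonneg add_nonneg_nonneg divide_nonneg_nonneg) auto
  have Domi: "Dom m integrable_on S" for m
    unfolding Dom_def[abs_def] S_def using integrable_on_cmult_left[OF dom_integrable, of "M m"] by simp
  have dbound: "\<bar>d m x\<bar> \<le> Dom m x" if "m \<ge> 1" "x \<in> S" for m x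
  proof -
    have "d m x = (P m (b*x) - P (Suc m) (b*x)) * f x" by (simp add: d_def G_def algebra_simps)
    moreover have "\<bar>(P m (b*x) - P (Suc m) (b*x)) * f x\<bar> \<le> Dom m x"
      unfolding Dom_def M_def
    proof (rule bound_transfer[where d = "\<lambda>y. P m y - P (Suc m) y"])
      show "\<And>y. 0 < y \<Longrightarrow> \<bar>P m y - P (Suc m) y\<bar> \<le> 4 * pi * y"
        using d_bound_small[OF that(1)] by simp
      show "\<And>y. 0 < y \<Longrightarrow> \<bar>P m y - P (Suc m) y\<bar> \<le> 2 * pi * (2 * real m + 1) / y\<^sup>2"
        using d_bound_large by simp
    qed (use b_pos dl C_pos hx f_nonneg antid that in \<open>auto simp: S_def\<close>)
    ultimately show ?thesis by simp
  qed
  have dint: "d m integrable_on S" if "m \<ge> 1" for m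
    by (rule measurable_bounded_by_integrable_imp_integrable[OF dmeas Domi _ S_leb[folded S_def]])
       (use dbound[OF that] in simp)
  define H where "H x = Dl k (b*x) * f x" for x
  have Hd: "H x = d (k+1) x - d (k+2) x" for x
    by (simp add: H_def d_def G_def Dl_def algebra_simps numeral_eq_Suc)
  have HG: "H x = G (k+3) x + G (k+1) x - 2 * G (k+2) x" for x
    by (simp add: H_def G_def Dl_def algebra_simps)
  have main: "I (k+3) + I (k+1) - 2 * I (k+2) \<ge> 0"
  proof (cases "G (k+2) integrable_on S")
    case True
    have G1: "G (k+1) integrable_on S"
    proof -
      have "(\<lambda>x. G (k+2) x + d (k+1) x) integrable_on S"
        using True dint[of "k+1"] by (intro integrable_add) auto
      then show ?thesis by (simp add: d_def numeral_eq_Suc)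
    qed
    have G3: "G (k+3) integrable_on S"
    proof -
      have "(\<lambda>x. G (k+2) x - d (k+2) x) integrable_on S"
        using True dint[of "k+2"] by (intro integrable_diff) auto
      then show ?thesis by (simp add: d_def numeral_eq_Suc)
    qed
    have Hhas: "(H has_integral (I (k+3) + I (k+1) - 2 * I (k+2))) S"
    proof -
      have "((\<lambda>x. G (k+3) x + G (k+1) x - 2 * G (k+2) x) has_integral (I (k+3) + I (k+1) - 2 * I (k+2))) S"
        unfolding I_def
        by (intro has_integral_diff has_integral_add has_integral_mult_right integrable_integral G1 G3 True)
      then show ?thesis unfolding HG[abs_def] .
    qed
    then have Hint: "H integrable_on S" by (auto simp: integrable_on_def)
    define e where "e j = inverse (real (Suc j))" for j
    define R where "R j = real (Suc j)" for j
    have e0: "e j > 0" for j by (simp add: e_def)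
    have eR: "e j \<le> R j" for j
    proof -
      have "inverse (real (Suc j)) \<le> inverse 1" by (rule le_imp_inverse_le) auto
      also have "\<dots> \<le> real (Suc j)" by simp
      finally show ?thesis by (simp add: e_def R_def)
    qed
    define fs where "fs j x = (if x \<in> {e j..R j} then H x else 0)" for j x
    have sub: "{e j..R j} \<subseteq> S" for j using e0[of j] by (auto simp: S_def)
    have fsint: "fs j integrable_on S" for j
    proof -
      have "{e j..R j} \<inter> S = {e j..R j}" using sub[of j] by auto
      moreover have "H integrable_on {e j..R j}" by (rule integrable_on_subinterval[OF Hint sub])
      ultimately show ?thesis unfolding fs_def[abs_def] integrable_restrict_Int by simp
    qed
    have fsI: "integral S (fs j) = integral {e j..R j} H" for j
    proof -
      have "{e j..R j} \<inter> S = {e j..R j}" using sub[of j] by auto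
      then show ?thesis unfolding fs_def[abs_def] integral_restrict_Int by simp
    qed
    have conv: "(\<lambda>j. integral S (fs j)) \<longlonglongrightarrow> integral S H"
    proof (rule dominated_convergence(2)[OF fsint, of "\<lambda>x. Dom (k+1) x + Dom (k+2) x"])
      show "(\<lambda>x. Dom (k+1) x + Dom (k+2) x) integrable_on S" by (intro integrable_add Domi)
    next
      fix j x assume x: "x \<in> S"
      have "\<bar>H x\<bar> \<le> Dom (k+1) x + Dom (k+2) x"
        using dbound[of "k+1" x] dbound[of "k+2" x] x unfolding Hd by simp
      then show "norm (fs j x) \<le> Dom (k+1) x + Dom (k+2) x"
        using Dom0[of "k+1" x] Dom0[of "k+2" x] by (simp add: fs_def)
    next
      fix x assume x: "x \<in> S"
      then have xp: "x > 0" by (simp add: S_def)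
      obtain N :: nat where N: "max x (1/x) < real N" using reals_Archimedean2 by blast
      have "eventually (\<lambda>j. fs j x = H x) sequentially"
      proof (rule eventually_sequentiallyI[of N])
        fix j assume j: "N \<le> j"
        then have jN: "real N \<le> real j" by simp
        have "x \<le> R j" using N jN by (simp add: R_def)
        moreover have "e j \<le> x"
        proof -
          have "1/x < real (Suc j)" using N jN by simp
          then have "inverse (real (Suc j)) < x" using xp by (simp add: field_simps)
          then show ?thesis by (simp add: e_def)
        qed
        ultimately show "fs j x = H x" by (simp add: fs_def)
      qed
      then show "(\<lambda>j. fs j x) \<longlonglongrightarrow> H x" by (rule tendsto_eventually)
    qed
    have lowlim: "(\<lambda>j. - (b * (C + 1) * e j)) \<longlonglongrightarrow> 0"
    proof -
      have "(\<lambda>j. - (b * (C + 1) * e j)) \<longlonglongrightarrow> - (b * (C + 1) * 0)"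
        unfolding e_def by (intro tendsto_intros LIMSEQ_inverse_real_of_nat)
      then show ?thesis by simp
    qed
    have ev: "eventually (\<lambda>j. - (b * (C + 1) * e j) \<le> integral S (fs j)) sequentially"
    proof -
      have "e \<longlonglongrightarrow> 0" unfolding e_def by (rule LIMSEQ_inverse_real_of_nat)
      then have "eventually (\<lambda>j. e j < \<delta>) sequentially" using dl by (intro order_tendstoD(2)) auto
      then show ?thesis
      proof eventually_elim
        case (elim j)
        have fb: "integral {e j..R j} (\<lambda>x. Dl k (b*x) * f x) \<ge> - (b * (e j)\<^sup>2 * f (e j))"
          by (rule finite_bound[OF b_pos f_deriv f'c f_nonneg f'np e0 eR])
        have "e j * f (e j) \<le> C + 1" by (rule hx[OF e0 elim])
        then have "b * (e j)\<^sup>2 * f (e j) \<le> b * (C + 1) * e j"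
          using b_pos e0[of j] mult_left_mono[of "e j * f (e j)" "C+1" "b * e j"]
          by (simp add: power2_eq_square mult_ac)
        then show ?case using fb unfolding fsI H_def by simp
      qed
    qed
    have "0 \<le> integral S H"
      by (rule tendsto_le[OF trivial_limit_sequentially conv lowlim ev])
    then show ?thesis using integral_unique[OF Hhas] by simp
  next
    case False
    have n1: "\<not> G (k+1) integrable_on S"
    proof
      assume "G (k+1) integrable_on S"
      then have "(\<lambda>x. G (k+1) x - d (k+1) x) integrable_on S"
        using dint[of "k+1"] by (intro integrable_diff) auto
      then show False using False by (simp add: d_def numeral_eq_Suc)
    qed
    have n3: "\<not> G (k+3) integrable_on S"
    proof
      assume "G (k+3) integrable_on S"
      then have "(\<lambda>x. G (k+3) x + d (k+2) x) integrable_on S"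
        using dint[of "k+2"] by (intro integrable_add) auto
      then show False using False by (simp add: d_def numeral_eq_Suc)
    qed
    show ?thesis using False n1 n3 by (simp add: I_def not_integrable_integral)
  qed
  have "lam f (n + 1) b + lam f (n - 1) b - 2 * lam f n b = complex_of_real (2 * (I (k+3) + I (k+1) - 2 * I (k+2)))"
    using lam_eq[of "k+3"] lam_eq[of "k+1"] lam_eq[of "k+2"] unfolding nk
    by (simp add: numeral_eq_Suc algebra_simps)
  then show ?thesis using main by simp
qed


end
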